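(* Consider a vehicle moving in the plane with dynamics $\dot q(t)=f(q(t),u(t))$ and intermittent ranging output $z_k=\|P_k-B_{i_k}\|$, where $P_k=P(t_k)$, and suppose the standing assumptions below (Property and Assumption) hold. Let $u^\star$ be a known admissible input on $[t_0,t_f]$ generating the abstract trajectory $\mathcal{T}$ with measurement points $\mathcal{P}_k(\Delta x,\Delta y,\phi)$, $k=0,\dots,k_f$. If there exists a unique roto-translation $(\Delta x,\Delta y,\phi)$ of $\mathcal{T}$ such that $$\|\mathcal{P}_k(\Delta x,\Delta y,\phi)-B_i\|=\rho_{k,i}$$ for each anchor index $i$ whose measurement is available at time $k$ and for all $k=0,\dots,k_f$, then the system is $u^\star$-constructible.
   Context: A vehicle with state $q\in\mathbb{R}^n$ and input $u\in\mathbb{R}^m$ obeys $\dot q=f(q,u)$; part of $q$ is its planar position $P(t)=[x(t),y(t)]^\top$ in a world frame $\mathcal{W}$. In a vehicle frame $\mathcal{V}$ the initial condition is set to $0$ (the frame is centred at the initial position), and the position $P_V(t)$ in $\mathcal{V}$ is computable from the known input history $u(s)$, $s\in[0,t]$. Property: given $P_V(t)$ for $t\in[t_0,t_f]$, there is a unique triple $(\Delta x,\Delta y,\phi)$ with $P(t)=R_\phi P_V(t)+[\Delta x,\Delta y]^\top$ for all $t\in[t_0,t_f]$, where $R_\phi=\begin{bmatrix}\cos\phi&-\sin\phi\\ \sin\phi&\cos\phi\end{bmatrix}$. Anchors are at known points $B_i=[X_i,Y_i]^\top$, $i=1,\dots,p$. Measurements are taken at known instants $t_k$ ($t_{k+1}>t_k$),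 one per instant: $z_k=\|P(t_k)-B_{i_k}\|$, also denoted $\rho_{k,i}$ with $i=i_k$. Measurement points: $\mathcal{P}_k(\Delta x,\Delta y,\phi)=R_\phi P_V(t_k)+[\Delta x,\Delta y]^\top$, $k=0,\dots,N_m-1$; the abstract trajectory $\mathcal{T}$ is the union of the segments joining consecutive $\mathcal{P}_k$. Assumption: the system with the continuous-time position $P(t)$ as output is constructible (its final state can be reconstructed from the input and output histories). Two final states $q_f,\bar q_f$ are $u^\star$-backward indistinguishable on $T=[t_0,t_f]$ if, under input $u^\star$, the trajectories ending at $q_f$ and $\bar q_f$ produce identical output sequences $z_k$, $k=0,\dots,k_f$; $\mathcal{I}^{u^\star}_{(b)}(q_f)$ denotes the set of final states backward indistinguishable from $q_f$. The system is $u^\star$-constructible at $q_f$ if $\mathcal{I}^{u^\star}_{(b)}(q_f)=\{q_f\}$, and $u^\star$-constructible if this holds at every $q_f$. *)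

theory Defs
  imports "HOL-Analysis.Analysis"
begin

definition rot :: "real \<Rightarrow> real^2 \<Rightarrow> real^2" where
  "rot \<phi> v = vector [cos \<phi> * v$1 - sin \<phi> * v$2, sin \<phi> * v$1 + cos \<phi> * v$2]"

definition pos :: "'n \<Rightarrow> 'n \<Rightarrow> real^'n \<Rightarrow> real^2" where
  "pos ix iy q = vector [q$ix, q$iy]"

definition is_back_traj ::
  "(real^'n \<Rightarrow> real^'m \<Rightarrow> real^'n) \<Rightarrow> (real \<Rightarrow> real^'m) \<Rightarrow> real \<Rightarrow> real
     \<Rightarrow> (real \<Rightarrow> real^'n) \<Rightarrow> real^'n \<Rightarrow> bool" where
  "is_back_traj f u t0 tf x qf \<longleftrightarrow> x tf = qf \<and>
     (\<forall>t\<in>{t0..tf}. (x has_vector_derivative f (x t) (u t)) (at t within {t0..tf}))"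

definition meas :: "'n \<Rightarrow> 'n \<Rightarrow> (nat \<Rightarrow> real^2) \<Rightarrow> (nat \<Rightarrow> nat) \<Rightarrow> (nat \<Rightarrow> real)
     \<Rightarrow> (real \<Rightarrow> real^'n) \<Rightarrow> nat \<Rightarrow> real" where
  "meas ix iy B ik tk x k = norm (pos ix iy (x (tk k)) - B (ik k))"

definition back_indist ::
  "(real^'n \<Rightarrow> real^'m \<Rightarrow> real^'n) \<Rightarrow> (real \<Rightarrow> real^'m) \<Rightarrow> real \<Rightarrow> real
     \<Rightarrow> 'n \<Rightarrow> 'n \<Rightarrow> (nat \<Rightarrow> real^2) \<Rightarrow> (nat \<Rightarrow> nat) \<Rightarrow> (nat \<Rightarrow> real) \<Rightarrow> nat
     \<Rightarrow> real^'n \<Rightarrow> real^'n \<Rightarrow> bool" where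
  "back_indist f u t0 tf ix iy B ik tk kf qf qb \<longleftrightarrow>
     (\<exists>x xb. is_back_traj f u t0 tf x qf \<and> is_back_traj f u t0 tf xb qb \<and>
        (\<forall>k\<le>kf. meas ix iy B ik tk x k = meas ix iy B ik tk xb k))"

definition back_indist_set ::
  "(real^'n \<Rightarrow> real^'m \<Rightarrow> real^'n) \<Rightarrow> (real \<Rightarrow> real^'m) \<Rightarrow> real \<Rightarrow> real
     \<Rightarrow> 'n \<Rightarrow> 'n \<Rightarrow> (nat \<Rightarrow> real^2) \<Rightarrow> (nat \<Rightarrow> nat) \<Rightarrow> (nat \<Rightarrow> real) \<Rightarrow> nat
     \<Rightarrow> real^'n \<Rightarrow> (real^'n) set" where
  "back_indist_set f u t0 tf ix iy B ik tk kf qf = {qb. back_indist f u t0 tf ix iy B ik tk kf qf qb}"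

definition u_constructible ::
  "(real^'n \<Rightarrow> real^'m \<Rightarrow> real^'n) \<Rightarrow> (real \<Rightarrow> real^'m) \<Rightarrow> real \<Rightarrow> real
     \<Rightarrow> 'n \<Rightarrow> 'n \<Rightarrow> (nat \<Rightarrow> real^2) \<Rightarrow> (nat \<Rightarrow> nat) \<Rightarrow> (nat \<Rightarrow> real) \<Rightarrow> nat \<Rightarrow> bool" where
  "u_constructible f u t0 tf ix iy B ik tk kf \<longleftrightarrow>
     (\<forall>qf. back_indist_set f u t0 tf ix iy B ik tk kf qf = {qf})"

text \<open>Measurement point P_k(dx,dy,phi) of the abstract trajectory, PV being the vehicle-frame position.\<close>
definition meas_point :: "(real \<Rightarrow> real^2) \<Rightarrow> (nat \<Rightarrow> real) \<Rightarrow> real \<Rightarrow> real \<Rightarrow> real \<Rightarrow> nat \<Rightarrow> real^2" where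
  "meas_point PV tk dx dy \<phi> k = rot \<phi> (PV (tk k)) + vector [dx, dy]"

end

theory Submission
  imports Defs
begin

theorem lemma1:
  fixes f :: "real^'n \<Rightarrow> real^'m \<Rightarrow> real^'n"
    and ustar :: "real \<Rightarrow> real^'m"
    and t0 tf :: real
    and ix iy :: 'n
    and PV :: "real \<Rightarrow> real^2"
    and B :: "nat \<Rightarrow> real^2" and p :: nat
    and tk :: "nat \<Rightarrow> real" and ik :: "nat \<Rightarrow> nat" and kf :: nat
  assumes interval: "t0 \<le> tf"
    and pos_idx: "ix \<noteq> iy"
    and times_incr: "\<And>k. k < kf \<Longrightarrow> tk k < tk (Suc k)"
    and times_in: "\<And>k. k \<le> kf \<Longrightarrow> tk k \<in> {t0..tf}"
    and anchors: "\<And>k. k \<le> kf \<Longrightarrow> ik k \<in> {1..p}"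
    and well_posed: "\<And>qf. \<exists>x. is_back_traj f ustar t0 tf x qf \<and>
          (\<forall>y. is_back_traj f ustar t0 tf y qf \<longrightarrow> (\<forall>t\<in>{t0..tf}. y t = x t))"
    and property: "\<And>x qf. is_back_traj f ustar t0 tf x qf \<Longrightarrow>
          \<exists>!g :: real \<times> real \<times> real. (case g of (dx, dy, \<phi>) \<Rightarrow>
             \<phi> \<in> {-pi<..pi} \<and>
             (\<forall>t\<in>{t0..tf}. pos ix iy (x t) = rot \<phi> (PV t) + vector [dx, dy]))"
    and constructible_pos: "\<And>x xb qf qb. is_back_traj f ustar t0 tf x qf \<Longrightarrow>
          is_back_traj f ustar t0 tf xb qb \<Longrightarrow>
          (\<forall>t\<in>{t0..tf}. pos ix iy (x t) = pos ix iy (xb t)) \<Longrightarrow> qf = qb"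
    and unique_fit: "\<And>x qf. is_back_traj f ustar t0 tf x qf \<Longrightarrow>
          \<exists>!g :: real \<times> real \<times> real. (case g of (dx, dy, \<phi>) \<Rightarrow>
             \<phi> \<in> {-pi<..pi} \<and>
             (\<forall>k\<le>kf. norm (meas_point PV tk dx dy \<phi> k - B (ik k)) = meas ix iy B ik tk x k))"
  shows "u_constructible f ustar t0 tf ix iy B ik tk kf"
proof -
  have fit: "\<forall>k\<le>kf. norm (meas_point PV tk dx dy \<phi> k - B (ik k)) = meas ix iy B ik tk x k"
    if "\<forall>t\<in>{t0..tf}. pos ix iy (x t) = rot \<phi> (PV t) + vector [dx, dy]" for x dx dy \<phi>
    using that times_in by (simp add: meas_point_def meas_def)
  show ?thesis unfolding u_constructible_def
  proof
    fix qf
    show "back_indist_set f ustar t0 tf ix iy B ik tk kf qf = {qf}"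
    proof (rule set_eqI, rule iffI)
      fix qb assume "qb \<in> back_indist_set f ustar t0 tf ix iy B ik tk kf qf"
      then obtain x xb where x: "is_back_traj f ustar t0 tf x qf" and xb: "is_back_traj f ustar t0 tf xb qb"
        and eq: "\<forall>k\<le>kf. meas ix iy B ik tk x k = meas ix iy B ik tk xb k"
        unfolding back_indist_set_def back_indist_def by blast
      obtain dx dy \<phi> where g: "\<phi> \<in> {-pi<..pi}" "\<forall>t\<in>{t0..tf}. pos ix iy (x t) = rot \<phi> (PV t) + vector [dx, dy]"
        using property[OF x] by auto
      obtain dx' dy' \<phi>' where g': "\<phi>' \<in> {-pi<..pi}" "\<forall>t\<in>{t0..tf}. pos ix iy (xb t) = rot \<phi>' (PV t) + vector [dx', dy']"
        using property[OF xb] by auto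
      have f1: "\<forall>k\<le>kf. norm (meas_point PV tk dx dy \<phi> k - B (ik k)) = meas ix iy B ik tk x k"
        using fit[OF g(2)] .
      have f2: "\<forall>k\<le>kf. norm (meas_point PV tk dx' dy' \<phi>' k - B (ik k)) = meas ix iy B ik tk x k"
        using fit[OF g'(2)] eq by simp
      have "(dx, dy, \<phi>) = (dx', dy', \<phi>')"
        using unique_fit[OF x] g(1) g'(1) f1 f2
        by (smt (verit, best) case_prod_conv)
      then have "\<forall>t\<in>{t0..tf}. pos ix iy (x t) = pos ix iy (xb t)" using g(2) g'(2) by simp
      then have "qf = qb" using constructible_pos[OF x xb] by simp
      then show "qb \<in> {qf}" by simp
    next
      fix qb assume "qb \<in> {qf}"
      then have "qb = qf" by simp
      obtain x where "is_back_traj f ustar t0 tf x qf" using well_posed by blast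
      then show "qb \<in> back_indist_set f ustar t0 tf ix iy B ik tk kf qf"
        unfolding back_indist_set_def back_indist_def using \<open>qb = qf\<close> by blast
    qed
  qed
qed

end
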